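(* For $r\in\{1,\dots,n\}$ let $f_r=[\psi_1,\psi_1^*]\cdots[\psi_r,\psi_r^*]\in\mathrm{Cl}_q(n,k)$, where $[A,B]=AB-BA$. Let $\phi_a$ denote either $\psi_a$ or $\psi_a^*$. Then: (i) if $a>r$, then $\phi_a f_r=f_r\phi_a$ and $\omega_a f_r = f_r\omega_a$; (ii) if $a\le r$, then $\phi_a f_r=-f_r\phi_a$; (iii) for any $r,s\le n$, $f_rf_s=f_sf_r$ and $f_r^2=1$.
   Context: Let $\mathbb{k}$ be a field of characteristic different from $2$, let $q\in\mathbb{k}^\times$, and let $n,k$ be positive integers. The quantum Clifford algebra $\mathrm{Cl}_q(n,k)$ is the unital associative $\mathbb{k}$-algebra generated by $\psi_a,\psi_a^*,\omega_a,\omega_a^{-1}$ for $a\in\{1,\dots,n\}$, subject to the relations (for all $a,b\in\{1,\dots,n\}$): $\omega_a\omega_b=\omega_b\omega_a$; $\omega_a\omega_a^{-1}=1$; $\omega_a\psi_b=q^{\delta_{ab}}\psi_b\omega_a$; $\omega_a\psi_b^*=q^{-\delta_{ab}}\psi_b^*\omega_a$; $\psi_a\psi_b+\psi_b\psi_a=0$; $\psi_a^*\psi_b^*+\psi_b^*\psi_a^*=0$; $\psi_a\psi_a^*+q^k\psi_a^*\psi_a=\omega_a^{-k}$; $\psi_a\psi_a^*+q^{-k}\psi_a^*\psi_a=\omega_a^{k}$; and $\psi_a\psi_b^*+\psi_b^*\psi_a=0$ if $a\neq b$. *)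

theory Defs
  imports Main
begin

(* A k-algebra structure on 'a: a ring homomorphism from the field 'k into the centre of 'a. *)
definition k_algebra_emb :: "('k::field \<Rightarrow> 'a::ring_1) \<Rightarrow> bool" where
  "k_algebra_emb emb \<longleftrightarrow>
     emb 1 = 1 \<and> (\<forall>x y. emb (x + y) = emb x + emb y) \<and>
     (\<forall>x y. emb (x * y) = emb x * emb y) \<and> (\<forall>c z. emb c * z = z * emb c)"

definition commutator :: "'a::ring \<Rightarrow> 'a \<Rightarrow> 'a" where
  "commutator A B = A * B - B * A"

(* Elements psi a, psis a (the starred generator psi_a^star), om a (= omega_a), omi a (= omega_a^{-1}), a = 1..n,
   satisfying the defining relations of Cl_q(n,k). *)
definition qcl_relations ::
  "('k::field \<Rightarrow> 'a::ring_1) \<Rightarrow> 'k \<Rightarrow> nat \<Rightarrow> nat \<Rightarrow>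
   (nat \<Rightarrow> 'a) \<Rightarrow> (nat \<Rightarrow> 'a) \<Rightarrow> (nat \<Rightarrow> 'a) \<Rightarrow> (nat \<Rightarrow> 'a) \<Rightarrow> bool" where
  "qcl_relations emb q n k psi psis om omi \<longleftrightarrow>
    (\<forall>a\<in>{1..n}. \<forall>b\<in>{1..n}.
       om a * om b = om b * om a \<and>
       om a * omi a = 1 \<and>
       om a * psi b = emb q ^ (if a = b then 1 else 0) * psi b * om a \<and>
       om a * psis b = emb (inverse q) ^ (if a = b then 1 else 0) * psis b * om a \<and>
       psi a * psi b + psi b * psi a = 0 \<and>
       psis a * psis b + psis b * psis a = 0 \<and>
       psi a * psis a + emb q ^ k * psis a * psi a = omi a ^ k \<and>
       psi a * psis a + emb (inverse q) ^ k * psis a * psi a = om a ^ k \<and>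
       (a \<noteq> b \<longrightarrow> psi a * psis b + psis b * psi a = 0))"

definition fr :: "(nat \<Rightarrow> 'a::ring_1) \<Rightarrow> (nat \<Rightarrow> 'a) \<Rightarrow> nat \<Rightarrow> 'a" where
  "fr psi psis r = prod_list (map (\<lambda>i. commutator (psi i) (psis i)) [1..<Suc r])"

end

theory Submission
  imports Defs
begin

lemma G1: fixes x y z :: "'a::ring"
  assumes "x*y = -(y*x)" "x*z = -(z*x)" shows "x*(y*z - z*y) = (y*z-z*y)*x"
proof -
  have "x*y*z = y*z*x"
  proof -
    have "x*y*z = -(y*x)*z" using assms(1) by simp
    also have "\<dots> = -(y*(x*z))" by (simp add: mult.assoc)
    also have "\<dots> = y*(z*x)" using assms(2) by simp
    finally show ?thesis by (simp add: mult.assoc)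
  qed
  moreover have "x*z*y = z*y*x"
  proof -
    have "x*z*y = -(z*x)*y" using assms(2) by simp
    also have "\<dots> = -(z*(x*y))" by (simp add: mult.assoc)
    also have "\<dots> = z*(y*x)" using assms(1) by simp
    finally show ?thesis by (simp add: mult.assoc)
  qed
  ultimately show ?thesis by (simp add: algebra_simps)
qed

lemma G2: fixes x z :: "'a::ring"
  assumes "x*x = 0" shows "x*(x*z - z*x) = -((x*z-z*x)*x)"
proof -
  have h: "z*x*x = 0" using assms by (simp add: mult.assoc)
  show ?thesis using assms h by (simp add: algebra_simps flip: mult.assoc)
qed

lemma G3: fixes x z :: "'a::ring"
  assumes "z*z = 0" shows "z*(x*z - z*x) = -((x*z-z*x)*z)"
proof -
  have h: "z*(z*x) = 0" using assms by (simp flip: mult.assoc)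
  show ?thesis using assms h by (simp add: algebra_simps mult.assoc)
qed

lemma G4: fixes x z s t W W' :: "'a::ring_1"
  assumes "x*x=0" "z*z=0" "x*z + s*z*x = W'" "x*z + t*z*x = W" "t*s = 1"
    "\<And>y. s*y = y*s" "\<And>y. t*y = y*t" "W*W' = 1"
  shows "(x*z - z*x)^2 = 1"
proof -
  have AB: "x*z*(z*x) = 0" "z*x*(x*z) = 0"
    using assms(1,2) by (metis mult.assoc mult_zero_left mult_zero_right)+
  have "W*W' = (x*z + t*(z*x))*(x*z + s*(z*x))" using assms(3,4) by (simp only: mult.assoc)
  also have "\<dots> = x*z*(x*z) + x*z*(s*(z*x)) + (t*(z*x))*(x*z) + (t*(z*x))*(s*(z*x))"
    by (simp only: distrib_left distrib_right add_ac)
  also have "x*z*(s*(z*x)) = 0"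
  proof -
    have "x*z*(s*(z*x)) = (x*z*s)*(z*x)" by (simp only: mult.assoc)
    also have "\<dots> = (s*(x*z))*(z*x)" using assms(6)[of "x*z"] by simp
    also have "\<dots> = s*(x*z*(z*x))" by (simp only: mult.assoc)
    finally show ?thesis using AB by simp
  qed
  also have "(t*(z*x))*(x*z) = 0" using AB by (simp add: mult.assoc)
  also have "(t*(z*x))*(s*(z*x)) = z*x*(z*x)"
  proof -
    have "(t*(z*x))*(s*(z*x)) = t*((z*x)*s)*(z*x)" by (simp only: mult.assoc)
    also have "\<dots> = t*(s*(z*x))*(z*x)" using assms(6)[of "z*x"] by simp
    also have "\<dots> = (t*s)*(z*x*(z*x))" by (simp only: mult.assoc)
    finally show ?thesis using assms(5) by simp
  qed
  finally have "x*z*(x*z) + z*x*(z*x) = 1" using assms(8) by simp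
  then show ?thesis using AB by (simp add: power2_eq_square algebra_simps)
qed

lemma P1: fixes x :: "'a::monoid_mult"
  assumes "\<forall>y\<in>set ys. x*y = y*x" shows "x*prod_list ys = prod_list ys*x"
  using assms by (induction ys) (simp_all, metis mult.assoc)

lemma La: fixes x P c :: "'a::ring_1"
  assumes h1: "x*P = -(P*x)" and h2: "x*c = c*x" shows "x*(P*c) = -((P*c)*x)"
proof -
  have "x*(P*c) = (x*P)*c" by (simp only: mult.assoc)
  also have "\<dots> = -(P*x*c)" using h1 by simp
  also have "\<dots> = -(P*(x*c))" by (simp only: mult.assoc)
  also have "\<dots> = -(P*(c*x))" using h2 by simp
  also have "\<dots> = -((P*c)*x)" by (simp only: mult.assoc)
  finally show ?thesis .
qed

lemma Lb: fixes x P c :: "'a::ring_1"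
  assumes h1: "x*P = P*x" and h2: "x*c = -(c*x)" shows "x*(P*c) = -((P*c)*x)"
proof -
  have "x*(P*c) = (x*P)*c" by (simp only: mult.assoc)
  also have "\<dots> = P*x*c" using h1 by simp
  also have "\<dots> = P*(x*c)" by (simp only: mult.assoc)
  also have "\<dots> = -(P*(c*x))" using h2 by simp
  also have "\<dots> = -((P*c)*x)" by (simp only: mult.assoc)
  finally show ?thesis .
qed

lemma Lc: fixes P c :: "'a::ring_1"
  assumes h: "c*P = P*c" shows "(P*c)*(P*c) = (P*P)*(c*c)"
proof -
  have "(P*c)*(P*c) = P*((c*P)*c)" by (simp only: mult.assoc)
  also have "\<dots> = P*((P*c)*c)" using h by simp
  also have "\<dots> = (P*P)*(c*c)" by (simp only: mult.assoc)
  finally show ?thesis .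
qed

lemma prod_split: "prod_list (map (c::nat \<Rightarrow> 'a::monoid_mult) [1..<Suc (Suc r)]) = prod_list (map c [1..<Suc r]) * c (Suc r)"
  by simp

lemma allc0: "(\<And>b. b\<in>{1..r} \<Longrightarrow> P (c b)) \<Longrightarrow> \<forall>y\<in>set (map c [1..<Suc r]). P y"
  by auto

lemma anti: fixes x :: "'a::ring_1" and c :: "nat \<Rightarrow> 'a"
  assumes "\<And>b. b \<in> {1..r} \<Longrightarrow> b \<noteq> a \<Longrightarrow> x * c b = c b * x" "x * c a = -(c a * x)" "a\<in>{1..r}"
  shows "x * prod_list (map c [1..<Suc r]) = -(prod_list (map c [1..<Suc r]) * x)"
  using assms
proof (induction r)
  case 0 then show ?case by simp
next
  case (Suc r)
  show ?case
  proof (cases "a = Suc r")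
    case True
    have "\<forall>y\<in>set (map c [1..<Suc r]). x * y = y * x"
    proof (rule allc0)
      fix b assume b: "b\<in>{1..r}"
      then have "b \<in> {1..Suc r}" "b \<noteq> a" using True by auto
      then show "x * c b = c b * x" by (rule Suc.prems(1))
    qed
    then have h: "x * prod_list (map c [1..<Suc r]) = prod_list (map c [1..<Suc r]) * x"
      by (rule P1)
    have h2: "x * c (Suc r) = -(c (Suc r) * x)" using Suc.prems(2) True by simp
    show ?thesis unfolding prod_split by (rule Lb[OF h h2])
  next
    case False
    have "x * prod_list (map c [1..<Suc r]) = -(prod_list (map c [1..<Suc r]) * x)"
    proof (rule Suc.IH)
      fix b assume "b\<in>{1..r}" "b \<noteq> a"
      then have "b \<in> {1..Suc r}" "b \<noteq> a" by auto
      then show "x * c b = c b * x" by (rule Suc.prems(1))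
    next
      show "x * c a = -(c a * x)" by (rule Suc.prems(2))
    next
      show "a\<in>{1..r}" using Suc.prems(3) False by auto
    qed
    moreover have "x * c (Suc r) = c (Suc r) * x"
    proof (rule Suc.prems(1))
      show "Suc r \<in> {1..Suc r}" by simp
      show "Suc r \<noteq> a" using False by simp
    qed
    ultimately show ?thesis unfolding prod_split by (rule La)
  qed
qed

lemma sq1: fixes c :: "nat \<Rightarrow> 'a::ring_1"
  assumes "\<And>i j. i\<in>{1..r} \<Longrightarrow> j\<in>{1..r} \<Longrightarrow> c i * c j = c j * c i"
    "\<And>i. i\<in>{1..r} \<Longrightarrow> c i * c i = 1"
  shows "prod_list (map c [1..<Suc r]) ^ 2 = 1"
  using assms
proof (induction r)
  case 0 then show ?case by simp
next
  case (Suc r)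
  let ?P = "prod_list (map c [1..<Suc r])"
  have "?P ^ 2 = 1"
  proof (rule Suc.IH)
    fix i j assume "i\<in>{1..r}" "j\<in>{1..r}"
    then have "i\<in>{1..Suc r}" "j\<in>{1..Suc r}" by auto
    then show "c i * c j = c j * c i" by (rule Suc.prems(1))
  next
    fix i assume "i\<in>{1..r}"
    then have "i\<in>{1..Suc r}" by auto
    then show "c i * c i = 1" by (rule Suc.prems(2))
  qed
  then have IH: "?P * ?P = 1" by (simp add: power2_eq_square)
  have "\<forall>y\<in>set (map c [1..<Suc r]). c (Suc r) * y = y * c (Suc r)"
  proof (rule allc0)
    fix b assume "b\<in>{1..r}"
    then have "Suc r\<in>{1..Suc r}" "b\<in>{1..Suc r}" by auto
    then show "c (Suc r) * c b = c b * c (Suc r)" by (rule Suc.prems(1))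
  qed
  then have "c (Suc r) * ?P = ?P * c (Suc r)" by (rule P1)
  then have "?P * c (Suc r) * (?P * c (Suc r)) = ?P * ?P * (c (Suc r) * c (Suc r))"
    by (rule Lc)
  moreover have "c (Suc r) * c (Suc r) = 1" by (rule Suc.prems(2)) simp
  ultimately show ?case unfolding prod_split using IH by (simp add: power2_eq_square)
qed

lemma G5: fixes w x z :: "'a::ring"
  assumes "w*x = x*w" "w*z = z*w" shows "w*(x*z - z*x) = (x*z-z*x)*w"
proof -
  have "w*x*z = x*z*w" "w*z*x = z*x*w" by (metis assms mult.assoc)+
  then show ?thesis by (simp add: algebra_simps)
qed

lemma powinv: fixes w v :: "'a::monoid_mult"
  assumes "w*v = 1" shows "w^k * v^k = 1"
proof (induction k)
  case 0 then show ?case by simp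
next
  case (Suc k)
  have a1: "w^Suc k = w * w^k" by (rule power_Suc)
  have a2: "v^Suc k = v^k * v" by (rule power_Suc2)
  have "w^Suc k * v^Suc k = w * (w^k * v^k) * v" unfolding a1 a2 by (simp only: mult.assoc)
  then show ?case using Suc assms by simp
qed

theorem proposition3p9:
  fixes emb :: "'k::field \<Rightarrow> 'a::ring_1"
    and q :: 'k and n k :: nat
    and psi psis om omi :: "nat \<Rightarrow> 'a"
  assumes "(2::'k) \<noteq> 0"
    and "q \<noteq> 0"
    and "n \<ge> 1" and "k \<ge> 1"
    and "k_algebra_emb emb"
    and "qcl_relations emb q n k psi psis om omi"
  shows "(\<forall>r\<in>{1..n}. \<forall>a\<in>{1..n}. r < a \<longrightarrow>
            (\<forall>phi\<in>{psi a, psis a}. phi * fr psi psis r = fr psi psis r * phi) \<and>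
            om a * fr psi psis r = fr psi psis r * om a)
       \<and> (\<forall>r\<in>{1..n}. \<forall>a\<in>{1..n}. a \<le> r \<longrightarrow>
            (\<forall>phi\<in>{psi a, psis a}. phi * fr psi psis r = - (fr psi psis r * phi)))
       \<and> (\<forall>r\<in>{1..n}. \<forall>s\<in>{1..n}. fr psi psis r * fr psi psis s = fr psi psis s * fr psi psis r)
       \<and> (\<forall>r\<in>{1..n}. fr psi psis r ^ 2 = 1)"
proof -
  define c where "c = (\<lambda>i. commutator (psi i) (psis i))"
  have frd: "\<And>r. fr psi psis r = prod_list (map c [1..<Suc r])" by (simp add: fr_def c_def)
  have cd: "\<And>i. c i = psi i * psis i - psis i * psi i" by (simp add: c_def commutator_def)
  have R: "om a * om b = om b * om a \<and>
       om a * omi a = 1 \<and>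
       om a * psi b = emb q ^ (if a = b then 1 else 0) * psi b * om a \<and>
       om a * psis b = emb (inverse q) ^ (if a = b then 1 else 0) * psis b * om a \<and>
       psi a * psi b + psi b * psi a = 0 \<and>
       psis a * psis b + psis b * psis a = 0 \<and>
       psi a * psis a + emb q ^ k * psis a * psi a = omi a ^ k \<and>
       psi a * psis a + emb (inverse q) ^ k * psis a * psi a = om a ^ k \<and>
       (a \<noteq> b \<longrightarrow> psi a * psis b + psis b * psi a = 0)"
    if "a\<in>{1..n}" "b\<in>{1..n}" for a b
    using assms(6)[unfolded qcl_relations_def, rule_format, OF that] .
  note E = assms(5)[unfolded k_algebra_emb_def]
  have E1: "emb 1 = 1" using E by (rule conjunct1)
  have Eadd: "\<And>x y. emb (x+y) = emb x + emb y" using E[THEN conjunct2, THEN conjunct1] by (rule spec2)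
  have Emul: "\<And>x y. emb (x*y) = emb x * emb y" using E[THEN conjunct2, THEN conjunct2, THEN conjunct1] by (rule spec2)
  have Ec: "\<And>x z. emb x * z = z * emb x" using E[THEN conjunct2, THEN conjunct2, THEN conjunct2] by (rule spec2)
  have Epow: "\<And>x m. emb (x^m) = emb x ^ m"
  proof -
    fix x m show "emb (x^m) = emb x ^ m"
      by (induction m) (simp_all add: E1 Emul)
  qed
  have E2: "emb (inverse 2) * 2 = 1"
  proof -
    have "emb 2 = 2" using Eadd[of 1 1] E1 by (simp add: one_add_one)
    then show ?thesis using Emul[of "inverse 2" 2] assms(1) E1 by simp
  qed
  have zero2: "x = 0" if "x + x = 0" for x :: 'a
  proof -
    have "x = emb (inverse 2) * 2 * x" using E2 by simp
    also have "\<dots> = emb (inverse 2) * (x + x)" by (simp add: mult.assoc mult_2)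
    finally show ?thesis using that by simp
  qed
  have pp: "psi a * psi b = -(psi b * psi a)" if "a\<in>{1..n}" "b\<in>{1..n}" for a b
  proof -
    have "psi a * psi b + psi b * psi a = 0" using R[OF that] by blast
    then show ?thesis by (simp add: eq_neg_iff_add_eq_0)
  qed
  have ss: "psis a * psis b = -(psis b * psis a)" if "a\<in>{1..n}" "b\<in>{1..n}" for a b
  proof -
    have "psis a * psis b + psis b * psis a = 0" using R[OF that] by blast
    then show ?thesis by (simp add: eq_neg_iff_add_eq_0)
  qed
  have ps: "psi a * psis b = -(psis b * psi a)" if "a\<in>{1..n}" "b\<in>{1..n}" "a \<noteq> b" for a b
  proof -
    have "psi a * psis b + psis b * psi a = 0" using R[OF that(1,2)] that(3) by blast
    then show ?thesis by (simp add: eq_neg_iff_add_eq_0)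
  qed
  have sp: "psis b * psi a = -(psi a * psis b)" if "a\<in>{1..n}" "b\<in>{1..n}" "a \<noteq> b" for a b
  proof -
    have "psi a * psis b + psis b * psi a = 0" using R[OF that(1,2)] that(3) by blast
    then have "psis b * psi a + psi a * psis b = 0" by (simp add: add.commute)
    then show ?thesis by (simp add: eq_neg_iff_add_eq_0)
  qed
  have p0: "psi a * psi a = 0" if "a\<in>{1..n}" for a
    by (rule zero2) (use R[OF that that] in blast)
  have s0: "psis a * psis a = 0" if "a\<in>{1..n}" for a
    by (rule zero2) (use R[OF that that] in blast)
  have omc: "om b * psi a = psi a * om b \<and> om b * psis a = psis a * om b"
    if "a\<in>{1..n}" "b\<in>{1..n}" "a \<noteq> b" for a b
  proof -
    have "om b * psi a = emb q ^ (if b = a then 1 else 0) * psi a * om b"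
      "om b * psis a = emb (inverse q) ^ (if b = a then 1 else 0) * psis a * om b"
      using R[OF that(2,1)] by blast+
    then show ?thesis using that(3) by simp
  qed
  have psic: "\<And>a b. a\<in>{1..n} \<Longrightarrow> b\<in>{1..n} \<Longrightarrow> a \<noteq> b \<Longrightarrow> psi b * c a = c a * psi b"
    unfolding cd by (rule G1) (auto intro: pp ps)
  have psisc: "\<And>a b. a\<in>{1..n} \<Longrightarrow> b\<in>{1..n} \<Longrightarrow> a \<noteq> b \<Longrightarrow> psis b * c a = c a * psis b"
    unfolding cd by (rule G1) (auto intro: ss sp)
  have omcc: "om b * c a = c a * om b" if "a\<in>{1..n}" "b\<in>{1..n}" "a \<noteq> b" for a b
  proof -
    have h1: "om b * psi a = psi a * om b" and h2: "om b * psis a = psis a * om b"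
      using omc[OF that] by blast+
    show ?thesis unfolding cd by (rule G5[OF h1 h2])
  qed
  have cc: "\<And>a b. a\<in>{1..n} \<Longrightarrow> b\<in>{1..n} \<Longrightarrow> c b * c a = c a * c b"
  proof -
    fix a b assume ab: "a\<in>{1..n}" "b\<in>{1..n}"
    show "c b * c a = c a * c b"
    proof (cases "a = b")
      case False
      have h1: "c b * psi a = psi a * c b" using psic[OF ab(2) ab(1)] False by simp
      have h2: "c b * psis a = psis a * c b" using psisc[OF ab(2) ab(1)] False by simp
      show ?thesis unfolding cd[of a] by (rule G5[OF h1 h2])
    qed simp
  qed
  have csq: "\<And>a. a\<in>{1..n} \<Longrightarrow> c a * c a = 1"
  proof -
    fix a assume a: "a\<in>{1..n}"
    have r1: "psi a * psis a + emb (q^k) * psis a * psi a = omi a ^ k"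
      and r2: "psi a * psis a + emb (inverse q^k) * psis a * psi a = om a ^ k"
      using R[OF a a] by (simp_all add: Epow)
    have ts: "emb (inverse q^k) * emb (q^k) = 1"
    proof -
      have "inverse q^k * q^k = (inverse q * q)^k" by (simp only: power_mult_distrib)
      also have "\<dots> = 1" using assms(2) by simp
      finally show ?thesis using Emul[of "inverse q^k" "q^k"] E1 by simp
    qed
    have "(psi a * psis a - psis a * psi a)^2 = 1"
      by (rule G4[OF p0[OF a] s0[OF a] r1 r2 ts Ec Ec powinv]) (use R[OF a a] in blast)
    then show "c a * c a = 1" by (simp add: cd power2_eq_square)
  qed
  have allc: "\<forall>y\<in>set (map c [1..<Suc r]). P y" if "\<And>b. b\<in>{1..r} \<Longrightarrow> P (c b)" for P r
    using that by auto
  have phic: "phi * c b = c b * phi" if "phi \<in> {psi a, psis a}" "a\<in>{1..n}" "b\<in>{1..n}" "a \<noteq> b" for phi a b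
  proof -
    have "phi = psi a \<or> phi = psis a" using that(1) by blast
    then show ?thesis
    proof
      assume "phi = psi a" then show ?thesis using psic[OF that(3) that(2)] that(4) by simp
    next
      assume "phi = psis a" then show ?thesis using psisc[OF that(3) that(2)] that(4) by simp
    qed
  qed
  show ?thesis
  proof (intro conjI ballI impI)
    fix r a phi assume r: "r\<in>{1..n}" and a: "a\<in>{1..n}" and ra: "r < a" and phi: "phi \<in> {psi a, psis a}"
    have "\<forall>y\<in>set (map c [1..<Suc r]). phi * y = y * phi"
    proof (rule allc)
      fix b assume b: "b\<in>{1..r}"
      then have "b\<in>{1..n}" "a \<noteq> b" using r ra by auto
      then show "phi * c b = c b * phi" using phic[OF phi a] by blast
    qed
    then show "phi * fr psi psis r = fr psi psis r * phi" unfolding frd by (rule P1)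
  next
    fix r a assume r: "r\<in>{1..n}" and a: "a\<in>{1..n}" and ra: "r < a"
    have "\<forall>y\<in>set (map c [1..<Suc r]). om a * y = y * om a"
    proof (rule allc)
      fix b assume b: "b\<in>{1..r}"
      then have "b\<in>{1..n}" "b \<noteq> a" using r ra by auto
      then show "om a * c b = c b * om a" using omcc[OF _ a] by blast
    qed
    then show "om a * fr psi psis r = fr psi psis r * om a" unfolding frd by (rule P1)
  next
    fix r a phi assume r: "r\<in>{1..n}" and a: "a\<in>{1..n}" and ra: "a \<le> r" and phi: "phi \<in> {psi a, psis a}"
    have pa: "phi * c a = -(c a * phi)"
      using phi G2[OF p0[OF a], of "psis a"] G3[OF s0[OF a], of "psi a"] by (auto simp: cd)
    have oth: "phi * c b = c b * phi" if "b\<in>{1..r}" "b \<noteq> a" for b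
    proof -
      have "b\<in>{1..n}" using that r by auto
      then show ?thesis using phic[OF phi a] that(2) by blast
    qed
    have ar: "a \<in> {1..r}" using a ra by auto
    show "phi * fr psi psis r = - (fr psi psis r * phi)" unfolding frd
      using anti[where x=phi and c=c and a=a and r=r, OF oth pa ar] .
  next
    fix r s assume r: "r\<in>{1..n}" and s: "s\<in>{1..n}"
    have h: "fr psi psis r * c b = c b * fr psi psis r" if "b \<in> {1..n}" for b
    proof -
      have "\<forall>y\<in>set (map c [1..<Suc r]). c b * y = y * c b"
      proof (rule allc)
        fix j assume j: "j\<in>{1..r}"
        then have "j\<in>{1..n}" using r by auto
        then show "c b * c j = c j * c b" using cc[OF _ that] by blast
      qed
      then show ?thesis unfolding frd by (rule P1[symmetric])
    qed
    have "\<forall>y\<in>set (map c [1..<Suc s]). fr psi psis r * y = y * fr psi psis r"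
    proof (rule allc)
      fix j assume j: "j\<in>{1..s}"
      then have "j\<in>{1..n}" using s by auto
      then show "fr psi psis r * c j = c j * fr psi psis r" by (rule h)
    qed
    then have "fr psi psis r * prod_list (map c [1..<Suc s]) = prod_list (map c [1..<Suc s]) * fr psi psis r"
      by (rule P1)
    then show "fr psi psis r * fr psi psis s = fr psi psis s * fr psi psis r"
      by (simp only: frd[of s])
  next
    fix r assume r: "r\<in>{1..n}"
    have c1: "c i * c j = c j * c i" if "i\<in>{1..r}" "j\<in>{1..r}" for i j
    proof -
      have "i\<in>{1..n}" "j\<in>{1..n}" using that r by auto
      then show ?thesis using cc by metis
    qed
    have c2: "c i * c i = 1" if "i\<in>{1..r}" for i
    proof -
      have "i\<in>{1..n}" using that r by auto
      then show ?thesis by (rule csq)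
    qed
    show "fr psi psis r ^ 2 = 1" unfolding frd by (rule sq1[OF c1 c2])
  qed
qed

end
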